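(* Let $1<n\leq m$ be integers. If $2\mid(m-n)$ or $n\leq\lceil\frac{m+1}{2}\rceil$, then $$\operatorname{ecc}_{Z_{n,m}}(0)=d(u^{(0)},0)=\binom{\lfloor\frac{m+n}{2}\rfloor+1}{2}+\binom{\lceil\frac{m-n}{2}\rceil+1}{2}.$$ Otherwise, $$\operatorname{ecc}_{Z_{n,m}}(0)=d(u^{(1)},0)=d(u^{(0)},0)+n-\lceil\tfrac{m+1}{2}\rceil.$$
   Context: Elements of $\mathbb{Z}_n$ are identified with their representatives in $\{0,\dots,n-1\}$. The dYoke graph $Z_{n,m}$ has as vertices all $u=(u_0,\dots,u_{m+1})\in\mathbb{Z}_n\times\{-1,0,1\}^m\times\mathbb{Z}_n$ with $\sum_{i=0}^{m+1}u_i\equiv0\pmod n$; $u,v$ are adjacent if there is $0\leq i\leq m$ such that $u_j=v_j$ for all $j\notin\{i,i+1\}$ and either ($u_i=v_i+1$, $u_{i+1}=v_{i+1}-1$) or ($u_i=v_i-1$, $u_{i+1}=v_{i+1}+1$), arithmetic in coordinates $0,m+1$ being in $\mathbb{Z}_n$. $0$ is the all-zero vertex, $d$ is graph distance in $Z_{n,m}$, $\operatorname{ecc}_{Z_{n,m}}(0)=\max_v d(v,0)$. $u^{(0)}$ is the vertex with $u_i=1$ for $1\leq i\leq m$ and $u_0\equiv-\lfloor\frac{m-n}{2}\rfloor\pmod n$ (and $u_{m+1}$ determined by the sum condition). When $n<m$ and $m-n$ is odd, $u^{(1)}$ is the vertex with $u_{\lceil (m+1)/2\rceil}=0$, $u_i=1$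 for all other $1\leq i\leq m$, and $u_0\equiv-\lfloor\frac{m-n}{2}\rfloor\pmod n$. *)

theory Defs
  imports Main "HOL-Library.Extended_Nat"
begin

text \<open>Vertices of the dYoke graph Z_{n,m}: functions nat => int with
  u 0, u (m+1) in {0..n-1} (representatives of Z_n), u i in {-1,0,1} for 1 <= i <= m,
  u i = 0 for i > m+1 (canonical padding), and sum of u 0..u (m+1) congruent 0 mod n.\<close>
definition dyoke_vert :: "nat \<Rightarrow> nat \<Rightarrow> (nat \<Rightarrow> int) \<Rightarrow> bool" where
  "dyoke_vert n m u \<longleftrightarrow>
     u 0 \<in> {0..<int n} \<and> u (m+1) \<in> {0..<int n} \<and>
     (\<forall>i\<in>{1..m}. u i \<in> {-1,0,1}) \<and>
     (\<forall>i>m+1. u i = 0) \<and>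
     (\<Sum>i\<le>m+1. u i) mod int n = 0"

text \<open>Equality of coordinate j; coordinates 0 and m+1 live in Z_n.\<close>
definition coord_eq :: "nat \<Rightarrow> nat \<Rightarrow> nat \<Rightarrow> int \<Rightarrow> int \<Rightarrow> bool" where
  "coord_eq n m j a b \<longleftrightarrow> (if j = 0 \<or> j = m+1 then a mod int n = b mod int n else a = b)"

definition dyoke_adj :: "nat \<Rightarrow> nat \<Rightarrow> (nat \<Rightarrow> int) \<Rightarrow> (nat \<Rightarrow> int) \<Rightarrow> bool" where
  "dyoke_adj n m u v \<longleftrightarrow> dyoke_vert n m u \<and> dyoke_vert n m v \<and>
     (\<exists>i\<le>m. (\<forall>j\<le>m+1. j \<noteq> i \<and> j \<noteq> i+1 \<longrightarrow> u j = v j) \<and>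
        ((coord_eq n m i (u i) (v i + 1) \<and> coord_eq n m (i+1) (u (i+1)) (v (i+1) - 1)) \<or>
         (coord_eq n m i (u i) (v i - 1) \<and> coord_eq n m (i+1) (u (i+1)) (v (i+1) + 1))))"

text \<open>Graph distance (infinity if unreachable).\<close>
definition dyoke_dist :: "nat \<Rightarrow> nat \<Rightarrow> (nat \<Rightarrow> int) \<Rightarrow> (nat \<Rightarrow> int) \<Rightarrow> enat" where
  "dyoke_dist n m u v = (INF k \<in> {k. (dyoke_adj n m ^^ k) u v}. enat k)"

definition dyoke_zero :: "nat \<Rightarrow> int" where
  "dyoke_zero = (\<lambda>_. 0)"

definition dyoke_ecc0 :: "nat \<Rightarrow> nat \<Rightarrow> enat" where
  "dyoke_ecc0 n m = (SUP v \<in> {v. dyoke_vert n m v}. dyoke_dist n m v dyoke_zero)"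

definition u0 :: "nat \<Rightarrow> nat \<Rightarrow> nat \<Rightarrow> int" where
  "u0 n m = (let a = (- int ((m - n) div 2)) mod int n in
     (\<lambda>i. if i = 0 then a else if i \<le> m then 1
          else if i = m+1 then (- (a + int m)) mod int n else 0))"

text \<open>u^(1): as u^(0) but coordinate ceil((m+1)/2) = (m+2) div 2 is 0.\<close>
definition u1 :: "nat \<Rightarrow> nat \<Rightarrow> nat \<Rightarrow> int" where
  "u1 n m = (let a = (- int ((m - n) div 2)) mod int n in
     (\<lambda>i. if i = 0 then a else if i = (m+2) div 2 then 0 else if i \<le> m then 1
          else if i = m+1 then (- (a + int m - 1)) mod int n else 0))"

end

theory Submission
  imports Defs
begin

definition lipf :: "nat \<Rightarrow> (nat \<Rightarrow> int) \<Rightarrow> bool" where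
  "lipf m x \<longleftrightarrow> (\<forall>i\<in>{1..m}. \<bar>x i - x (i-1)\<bar> \<le> 1)"
definition costf :: "nat \<Rightarrow> (nat \<Rightarrow> int) \<Rightarrow> int" where
  "costf m x = (\<Sum>i\<le>m. \<bar>x i\<bar>)"
definition islift :: "nat \<Rightarrow> nat \<Rightarrow> (nat \<Rightarrow> int) \<Rightarrow> (nat \<Rightarrow> int) \<Rightarrow> bool" where
  "islift n m u x \<longleftrightarrow> x 0 mod int n = u 0 \<and> (\<forall>i\<in>{1..m}. x i - x (i-1) = u i)"
definition vof :: "nat \<Rightarrow> nat \<Rightarrow> (nat \<Rightarrow> int) \<Rightarrow> nat \<Rightarrow> int" where
  "vof n m x = (\<lambda>j. if j = 0 then x 0 mod int n else if j \<le> m then x j - x (j-1)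
      else if j = m+1 then (- x m) mod int n else 0)"

lemma sum_split0: "(\<Sum>i\<le>m. f i) = f 0 + (\<Sum>i\<in>{1..m}. f i)" for f :: "nat \<Rightarrow> int"
  by (simp add: atMost_atLeast0 sum.atLeast_Suc_atMost)

lemma tele: "(\<Sum>j\<in>{1..m}. x j - x (j-1)) = x m - (x 0 :: int)" for m :: nat
  by (induction m) (auto simp: sum.atLeast_Suc_atMost_Suc_shift)

lemma vof_vert:
  assumes n: "0 < n" and L: "lipf m x"
  shows "dyoke_vert n m (vof n m x)"
proof -
  have s: "(\<Sum>i\<le>m+1. vof n m x i) = x 0 mod int n + (x m - x 0) + (- x m) mod int n"
  proof -
    have "(\<Sum>i\<le>m+1. vof n m x i) = (\<Sum>i\<le>m. vof n m x i) + vof n m x (m+1)" by simp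
    also have "(\<Sum>i\<le>m. vof n m x i) = vof n m x 0 + (\<Sum>i\<in>{1..m}. vof n m x i)" by (rule sum_split0)
    also have "(\<Sum>i\<in>{1..m}. vof n m x i) = (\<Sum>i\<in>{1..m}. x i - x (i-1))"
      by (rule sum.cong) (auto simp: vof_def)
    finally show ?thesis using tele[of x m] by (simp add: vof_def)
  qed
  have "(x 0 mod int n + (x m - x 0) + (- x m) mod int n) mod int n = 0"
    by (simp add: mod_simps)
  then have "(\<Sum>i\<le>m+1. vof n m x i) mod int n = 0" by (simp only: s)
  moreover have "\<forall>i\<in>{1..m}. vof n m x i \<in> {-1,0,1}" using L by (auto simp: vof_def lipf_def abs_le_iff)
  ultimately show ?thesis using n unfolding dyoke_vert_def
    by (simp add: vof_def)
qed

lemma cost_upd: "i \<le> m \<Longrightarrow> costf m (y(i := w)) = costf m y - \<bar>y i\<bar> + \<bar>w\<bar>"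
proof -
  assume i: "i \<le> m"
  have "costf m (y(i := w)) = (\<Sum>k\<le>m. \<bar>y k\<bar> + (if k = i then \<bar>w\<bar> - \<bar>y i\<bar> else 0))"
    unfolding costf_def by (rule sum.cong) auto
  also have "\<dots> = costf m y + (\<bar>w\<bar> - \<bar>y i\<bar>)"
    using i by (simp add: sum.distrib costf_def)
  finally show ?thesis by simp
qed

lemma lift_exists:
  assumes "dyoke_vert n m u"
  shows "islift n m u (\<lambda>i. u 0 + (\<Sum>j\<in>{1..i}. u j))"
proof -
  have "u 0 mod int n = u 0" using assms by (auto simp: dyoke_vert_def)
  moreover have "(u 0 + (\<Sum>j\<in>{1..i}. u j)) - (u 0 + (\<Sum>j\<in>{1..i-1}. u j)) = u i" if hi: "i \<ge> 1" for i
    using hi by (cases i) auto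
  ultimately show ?thesis unfolding islift_def by auto
qed

lemma lift_lip: "dyoke_vert n m u \<Longrightarrow> islift n m u x \<Longrightarrow> lipf m x"
  unfolding dyoke_vert_def islift_def lipf_def by fastforce

lemma lift_vof:
  assumes n: "0 < n" and V: "dyoke_vert n m u" and L: "islift n m u x"
  shows "vof n m x = u"
proof
  fix j
  have xm: "x m = x 0 + (\<Sum>j\<in>{1..m}. u j)"
  proof -
    have "(\<Sum>j\<in>{1..m}. u j) = (\<Sum>j\<in>{1..m}. x j - x (j-1))"
      using L by (auto simp: islift_def intro!: sum.cong)
    then show ?thesis using tele[of x m] by simp
  qed
  have su: "(\<Sum>i\<le>m+1. u i) = u 0 + (\<Sum>j\<in>{1..m}. u j) + u (m+1)"
    using sum_split0[of u m] by simp
  have u0: "u 0 = x 0 mod int n" using L by (simp add: islift_def)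
  have "(u 0 + (\<Sum>j\<in>{1..m}. u j) + u (m+1)) mod int n = 0" using V su by (simp add: dyoke_vert_def)
  moreover have "(u 0 + (\<Sum>j\<in>{1..m}. u j) + u (m+1)) mod int n = (x 0 + (\<Sum>j\<in>{1..m}. u j) + u (m+1)) mod int n"
    unfolding u0 by (metis (no_types) add.assoc mod_add_left_eq)
  ultimately have "(x m + u (m+1)) mod int n = 0" using xm by simp
  then have "u (m+1) mod int n = (- x m) mod int n"
    by (metis add.commute add_diff_cancel_left' diff_0 mod_diff_left_eq)
  moreover have "u (m+1) mod int n = u (m+1)" using V by (auto simp: dyoke_vert_def)
  ultimately have um: "u (m+1) = (- x m) mod int n" by simp
  show "vof n m x j = u j"
    using L V um unfolding vof_def islift_def dyoke_vert_def by auto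
qed

lemma vof_lift: "islift n m (vof n m x) x"
  unfolding islift_def vof_def by auto

lemma lift_shift: "islift n m u x \<Longrightarrow> c mod int n = 0 \<Longrightarrow> islift n m u (\<lambda>i. x i - c)"
proof -
  assume a: "islift n m u x" and c: "c mod int n = 0"
  have "(x 0 - c) mod int n = (x 0 - c mod int n) mod int n" by (simp add: mod_diff_right_eq)
  then have "(x 0 - c) mod int n = x 0 mod int n" using c by simp
  then show ?thesis using a unfolding islift_def by auto
qed

definition fM :: "nat \<Rightarrow> int \<Rightarrow> int" where
  "fM M c = (\<Sum>i\<le>M. \<bar>int i - c\<bar>)"

lemma fM_Suc: "fM (Suc M) c = fM M c + \<bar>int M + 1 - c\<bar>"
  by (simp add: fM_def)

lemma fM_closed:
  "(0 \<le> c \<and> c \<le> int M \<longrightarrow> 2 * fM M c = int M * (int M + 1) + 2*c*c - 2*c*int M) \<and>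
   (c \<ge> int M \<longrightarrow> 2 * fM M c = (int M + 1) * (2*c - int M)) \<and>
   (c \<le> 0 \<longrightarrow> 2 * fM M c = (int M + 1) * (int M - 2*c))"
proof (induction M arbitrary: c)
  case 0
  then show ?case by (auto simp: fM_def)
next
  case (Suc M)
  have IH1: "0 \<le> c \<Longrightarrow> c \<le> int M \<Longrightarrow> 2 * fM M c = int M * (int M + 1) + 2*c*c - 2*c*int M"
    and IH2: "c \<ge> int M \<Longrightarrow> 2 * fM M c = (int M + 1) * (2*c - int M)"
    and IH3: "c \<le> 0 \<Longrightarrow> 2 * fM M c = (int M + 1) * (int M - 2*c)" using Suc.IH by auto
  show ?case
  proof (intro conjI impI)
    assume c: "0 \<le> c \<and> c \<le> int (Suc M)"
    show "2 * fM (Suc M) c = int (Suc M) * (int (Suc M) + 1) + 2 * c * c - 2 * c * int (Suc M)"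
    proof (cases "c \<le> int M")
      case True
      then show ?thesis using IH1 c by (simp add: fM_Suc algebra_simps)
    next
      case False
      then have "c = int M + 1" using c by simp
      then show ?thesis using IH2 by (simp add: fM_Suc algebra_simps)
    qed
  next
    assume c: "c \<ge> int (Suc M)"
    then show "2 * fM (Suc M) c = (int (Suc M) + 1) * (2 * c - int (Suc M))"
      using IH2 by (simp add: fM_Suc algebra_simps)
  next
    assume c: "c \<le> 0"
    then show "2 * fM (Suc M) c = (int (Suc M) + 1) * (int (Suc M) - 2 * c)"
      using IH3 by (simp add: fM_Suc algebra_simps)
  qed
qed

lemma fM_mid: "0 \<le> c \<Longrightarrow> c \<le> int M \<Longrightarrow> 2 * fM M c = int M * (int M + 1) + 2*c*c - 2*c*int M"
  using fM_closed by blast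
lemma fM_hi: "c \<ge> int M \<Longrightarrow> 2 * fM M c = (int M + 1) * (2*c - int M)"
  using fM_closed by blast
lemma fM_lo: "c \<le> 0 \<Longrightarrow> 2 * fM M c = (int M + 1) * (int M - 2*c)"
  using fM_closed by blast

lemma fM_D: "fM M (c+1) - fM M c = 2 * max 0 (min (c+1) (int M + 1)) - (int M + 1)"
proof (induction M)
  case 0
  then show ?case by (auto simp: fM_def max_def min_def)
next
  case (Suc M)
  have "fM (Suc M) (c+1) - fM (Suc M) c = (fM M (c+1) - fM M c) + (\<bar>int M - c\<bar> - \<bar>int M + 1 - c\<bar>)"
    by (simp add: fM_Suc)
  also have "\<dots> = 2 * max 0 (min (c+1) (int M + 1)) - (int M + 1) + (\<bar>int M - c\<bar> - \<bar>int M + 1 - c\<bar>)"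
    using Suc.IH by simp
  finally show ?case by (simp add: max_def min_def abs_if)
qed

lemma fM_up: assumes "2*c0 + 1 \<ge> int M" "c0 \<le> c" shows "fM M c0 \<le> fM M c"
proof -
  have "fM M c0 \<le> fM M (c0 + int k)" for k
  proof (induction k)
    case 0 then show ?case by simp
  next
    case (Suc k)
    have "fM M (c0 + int k + 1) - fM M (c0 + int k) \<ge> 0"
      unfolding fM_D using assms(1) by (auto simp: max_def min_def)
    then have "fM M c0 \<le> fM M (c0 + int k + 1)" using Suc by linarith
    moreover have "c0 + int (Suc k) = c0 + int k + 1" by simp
    ultimately show ?case by metis
  qed
  from this[of "nat (c - c0)"] show ?thesis using assms(2) by simp
qed

lemma fM_down: assumes "2*c0 \<le> int M + 1" "c \<le> c0" shows "fM M c0 \<le> fM M c"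
proof -
  have "fM M c0 \<le> fM M (c0 - int k)" for k
  proof (induction k)
    case 0 then show ?case by simp
  next
    case (Suc k)
    have "fM M (c0 - int k - 1 + 1) - fM M (c0 - int k - 1) \<le> 0"
      unfolding fM_D using assms(1) by (auto simp: max_def min_def)
    then show ?case using Suc by (simp add: algebra_simps)
  qed
  from this[of "nat (c0 - c)"] show ?thesis using assms(2) by simp
qed

lemma adj_fwd:
  assumes n: "0 < n" and Lx: "lipf m x" and Ly: "lipf m (x(i := x i + s))" and i: "i \<le> m"
    and s: "s = 1 \<or> s = -1"
  shows "dyoke_adj n m (vof n m x) (vof n m (x(i := x i + s)))"
proof -
  let ?y = "x(i := x i + s)"
  have same: "\<forall>j\<le>m+1. j \<noteq> i \<and> j \<noteq> i+1 \<longrightarrow> vof n m x j = vof n m ?y j"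
    by (auto simp: vof_def)
  have c1: "coord_eq n m i (vof n m x i) (vof n m ?y i - s)"
  proof (cases "i = 0")
    case True
    have "(x 0 mod int n) mod int n = ((x 0 + s) mod int n - s) mod int n"
      by (simp add: mod_simps)
    then show ?thesis using True by (simp add: coord_eq_def vof_def)
  next
    case False
    then have "i - 1 \<noteq> i" by simp
    then show ?thesis using i False by (simp add: coord_eq_def vof_def)
  qed
  have c2: "coord_eq n m (i+1) (vof n m x (i+1)) (vof n m ?y (i+1) + s)"
  proof (cases "i = m")
    case True
    have "((- x m) mod int n) mod int n = ((- (x m + s)) mod int n + s) mod int n"
      by (simp add: mod_simps)
    then show ?thesis using True by (simp add: coord_eq_def vof_def)
  next
    case False
    then show ?thesis using i by (simp add: coord_eq_def vof_def)
  qed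
  show ?thesis
    unfolding dyoke_adj_def
    using vof_vert[OF n Lx] vof_vert[OF n Ly] i same c1 c2 s by auto
qed

lemma adj_back:
  assumes n: "0 < n" and A: "dyoke_adj n m u v" and L: "islift n m v y"
  shows "\<exists>x. islift n m u x \<and> costf m x \<le> costf m y + 1"
proof -
  have Vu: "dyoke_vert n m u" and Vv: "dyoke_vert n m v" using A by (auto simp: dyoke_adj_def)
  obtain i s where i: "i \<le> m" and s: "s = 1 \<or> s = -1"
    and same: "\<forall>j\<le>m+1. j \<noteq> i \<and> j \<noteq> i+1 \<longrightarrow> u j = v j"
    and c1: "coord_eq n m i (u i) (v i + s)" and c2: "coord_eq n m (i+1) (u (i+1)) (v (i+1) - s)"
  proof -
    obtain i where i: "i \<le> m" and same: "\<forall>j\<le>m+1. j \<noteq> i \<and> j \<noteq> i+1 \<longrightarrow> u j = v j"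
      and alt: "(coord_eq n m i (u i) (v i + 1) \<and> coord_eq n m (i + 1) (u (i + 1)) (v (i + 1) - 1)) \<or>
           (coord_eq n m i (u i) (v i - 1) \<and> coord_eq n m (i + 1) (u (i + 1)) (v (i + 1) + 1))"
      using A unfolding dyoke_adj_def by blast
    from alt show thesis
    proof
      assume "coord_eq n m i (u i) (v i + 1) \<and> coord_eq n m (i + 1) (u (i + 1)) (v (i + 1) - 1)"
      then show thesis using that[of i 1] i same by simp
    next
      assume "coord_eq n m i (u i) (v i - 1) \<and> coord_eq n m (i + 1) (u (i + 1)) (v (i + 1) + 1)"
      then show thesis using that[of i "-1"] i same by simp
    qed
  qed
  define x where "x = y(i := y i + s)"
  have u0r: "u 0 mod int n = u 0" using Vu by (auto simp: dyoke_vert_def)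
  have x0: "x 0 mod int n = u 0"
  proof (cases "i = 0")
    case True
    then have "u 0 mod int n = (v 0 + s) mod int n" using c1 by (simp add: coord_eq_def)
    moreover have "v 0 = y 0 mod int n" using L by (simp add: islift_def)
    ultimately show ?thesis using True u0r by (simp add: x_def mod_simps)
  next
    case False
    then have "u 0 = v 0" using same by auto
    then show ?thesis using L False by (simp add: x_def islift_def)
  qed
  have xj: "x j - x (j-1) = u j" if j: "j \<in> {1..m}" for j
  proof -
    have yj: "y j - y (j-1) = v j" using L j by (simp add: islift_def)
    consider "j = i" | "j = i+1" | "j \<noteq> i \<and> j \<noteq> i+1" by blast
    then show ?thesis
    proof cases
      case 1
      then have "u j = v j + s" using c1 j by (simp add: coord_eq_def)
      moreover have "i - 1 \<noteq> i" using 1 j by auto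
      ultimately show ?thesis using 1 yj j by (simp add: x_def)
    next
      case 2
      then have "u j = v j - s" using c2 j by (simp add: coord_eq_def)
      then show ?thesis using 2 yj j by (simp add: x_def)
    next
      case 3
      then show ?thesis using same yj j by (auto simp: x_def)
    qed
  qed
  have "islift n m u x" using x0 xj by (simp add: islift_def)
  moreover have "costf m x \<le> costf m y + 1"
    using cost_upd[OF i, of y "y i + s"] s by (auto simp: x_def)
  ultimately show ?thesis by blast
qed

lemma path_back:
  assumes n: "0 < n"
  shows "(dyoke_adj n m ^^ k) u v \<Longrightarrow> islift n m v y \<Longrightarrow> \<exists>x. islift n m u x \<and> costf m x \<le> costf m y + int k"
proof (induction k arbitrary: v y)
  case 0
  then show ?case by auto
next
  case (Suc k)
  from Suc.prems(1) obtain w where P: "(dyoke_adj n m ^^ k) u w" and A: "dyoke_adj n m w v"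
    by (auto elim: relpowp_Suc_E)
  obtain x' where x': "islift n m w x'" "costf m x' \<le> costf m y + 1"
    using adj_back[OF n A Suc.prems(2)] by blast
  obtain x where "islift n m u x" "costf m x \<le> costf m x' + int k" using Suc.IH[OF P x'(1)] by blast
  then show ?case using x' by (intro exI[of _ x]) auto
qed

lemma cost_nonneg: "0 \<le> costf m x" by (simp add: costf_def sum_nonneg)

lemma vof_zero:
  assumes "\<forall>i\<le>m. x i = 0" shows "vof n m x = dyoke_zero"
  using assms by (auto simp: vof_def dyoke_zero_def)

lemma path_fwd:
  assumes n: "0 < n"
  shows "lipf m x \<Longrightarrow> nat (costf m x) = k \<Longrightarrow> (dyoke_adj n m ^^ k) (vof n m x) dyoke_zero"
proof (induction k arbitrary: x)
  case 0
  then have "costf m x = 0" using cost_nonneg[of m x] by simp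
  then have "\<forall>i\<le>m. x i = 0" unfolding costf_def
    by (subst (asm) sum_nonneg_eq_0_iff) auto
  then show ?case by (simp add: vof_zero)
next
  case (Suc k)
  have fin: "finite (x ` {..m})" "x ` {..m} \<noteq> {}" by auto
  have "\<exists>i s. i \<le> m \<and> (s = 1 \<or> s = -1) \<and> lipf m (x(i := x i + s)) \<and> costf m (x(i := x i + s)) = costf m x - 1"
  proof (cases "\<exists>i\<le>m. x i > 0")
    case True
    obtain i where i: "i \<le> m" "x i = Max (x ` {..m})" proof -
      from Max_in[OF fin] obtain i where "i \<in> {..m}" "Max (x ` {..m}) = x i" by blast
      then show thesis using that by auto
    qed
    have ge: "x j \<le> x i" if "j \<le> m" for j using i that fin by auto
    have pos: "x i > 0" using True ge by force
    have "lipf m (x(i := x i + -1))"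
      using Suc.prems(1) ge unfolding lipf_def
      by (auto simp: abs_le_iff)
    moreover have "costf m (x(i := x i + -1)) = costf m x - 1" using cost_upd[OF i(1)] pos by simp
    ultimately show ?thesis using i by blast
  next
    case False
    then have np: "\<forall>i\<le>m. x i \<le> 0" by force
    have "costf m x \<noteq> 0" using Suc.prems(2) by auto
    then obtain i0 where "i0 \<le> m" "x i0 \<noteq> 0" unfolding costf_def by (metis (no_types, lifting) atMost_iff sum.neutral abs_0_eq)
    then have neg0: "x i0 < 0" using np by force
    obtain i where i: "i \<le> m" "x i = Min (x ` {..m})" proof -
      from Min_in[OF fin] obtain i where "i \<in> {..m}" "Min (x ` {..m}) = x i" by blast
      then show thesis using that by auto
    qed
    have le: "x i \<le> x j" if "j \<le> m" for j using i that fin by auto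
    have neg: "x i < 0" using le[OF \<open>i0 \<le> m\<close>] neg0 by simp
    have "lipf m (x(i := x i + 1))"
      using Suc.prems(1) le unfolding lipf_def
      by (auto simp: abs_le_iff)
    moreover have "costf m (x(i := x i + 1)) = costf m x - 1" using cost_upd[OF i(1)] neg by simp
    ultimately show ?thesis using i by blast
  qed
  then obtain i s where i: "i \<le> m" and s: "s = 1 \<or> s = -1" and L: "lipf m (x(i := x i + s))"
    and c: "costf m (x(i := x i + s)) = costf m x - 1" by blast
  have "nat (costf m (x(i := x i + s))) = k" using c Suc.prems(2) by simp
  then have P: "(dyoke_adj n m ^^ k) (vof n m (x(i := x i + s))) dyoke_zero" using Suc.IH L by blast
  show ?case by (rule relpowp_Suc_I2[OF adj_fwd[OF n Suc.prems(1) L i s] P])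
qed

lemma dist_le:
  assumes n: "0 < n" and V: "dyoke_vert n m u" and L: "islift n m u x"
  shows "dyoke_dist n m u dyoke_zero \<le> enat (nat (costf m x))"
proof -
  have "(dyoke_adj n m ^^ nat (costf m x)) u dyoke_zero"
    using path_fwd[OF n lift_lip[OF V L] refl] lift_vof[OF n V L] by simp
  then show ?thesis unfolding dyoke_dist_def by (auto intro: INF_lower2)
qed

lemma dist_ge:
  assumes n: "0 < n" and V: "dyoke_vert n m u"
  shows "\<exists>x. islift n m u x \<and> enat (nat (costf m x)) \<le> dyoke_dist n m u dyoke_zero"
proof -
  let ?K = "{k. (dyoke_adj n m ^^ k) u dyoke_zero}"
  obtain x0 where L0: "islift n m u x0" using lift_exists[OF V] by blast
  have "nat (costf m x0) \<in> ?K"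
    using path_fwd[OF n lift_lip[OF V L0] refl] lift_vof[OF n V L0] by simp
  then have ne: "?K \<noteq> {}" by blast
  define k0 where "k0 = (LEAST k. k \<in> ?K)"
  have k0K: "k0 \<in> ?K" using ne unfolding k0_def by (metis LeastI_ex ex_in_conv)
  have "enat k0 \<le> dyoke_dist n m u dyoke_zero" unfolding dyoke_dist_def
    by (rule INF_greatest) (auto simp: k0_def intro: Least_le)
  moreover have zl: "islift n m dyoke_zero (\<lambda>_. 0)" by (simp add: islift_def dyoke_zero_def)
  obtain x where "islift n m u x" "costf m x \<le> costf m (\<lambda>_. 0) + int k0"
    using path_back[OF n _ zl] k0K by blast
  moreover have "costf m (\<lambda>_. 0) = 0" by (simp add: costf_def)
  ultimately show ?thesis by (intro exI[of _ x]) (auto intro: order.trans[rotated])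
qed

lemma lip_dist: "lipf m x \<Longrightarrow> i \<le> j \<Longrightarrow> j \<le> m \<Longrightarrow> \<bar>x j - x i\<bar> \<le> int (j - i)"
proof (induction j)
  case 0
  then show ?case by simp
next
  case (Suc j)
  show ?case
  proof (cases "i = Suc j")
    case True then show ?thesis by simp
  next
    case False
    then have "i \<le> j" using Suc.prems by simp
    then have "\<bar>x j - x i\<bar> \<le> int (j - i)" using Suc by simp
    moreover have "\<bar>x (Suc j) - x j\<bar> \<le> 1" using Suc.prems(1,3) unfolding lipf_def by force
    ultimately show ?thesis using \<open>i \<le> j\<close> by (simp add: of_nat_diff)
  qed
qed

lemma lip_dist': "lipf m x \<Longrightarrow> i \<le> m \<Longrightarrow> j \<le> m \<Longrightarrow> \<bar>x j - x i\<bar> \<le> \<bar>int j - int i\<bar>"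
proof -
  assume a: "lipf m x" "i \<le> m" "j \<le> m"
  show ?thesis
  proof (cases "i \<le> j")
    case True then show ?thesis using lip_dist[OF a(1) True a(3)] by (simp add: of_nat_diff)
  next
    case False then show ?thesis using lip_dist[OF a(1) _ a(2), of j] by (simp add: of_nat_diff abs_minus_commute)
  qed
qed

lemma div_eq_near:
  fixes a b n :: int
  assumes n: "0 < n" and a: "a mod n \<noteq> 0" and b: "b mod n \<noteq> 0" and ab: "\<bar>a - b\<bar> \<le> 1"
  shows "a div n = b div n"
proof (rule ccontr)
  assume ne: "a div n \<noteq> b div n"
  define d where "d = b div n - a div n"
  have ea: "a = n * (a div n) + a mod n" and eb: "b = n * (b div n) + b mod n" by simp_all
  have ra: "0 < a mod n" "a mod n < n" using a n pos_mod_sign[OF n, of a] pos_mod_bound[OF n, of a] by auto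
  have rb: "0 < b mod n" "b mod n < n" using b n pos_mod_sign[OF n, of b] pos_mod_bound[OF n, of b] by auto
  have bd: "b - a = n * d + (b mod n - a mod n)" unfolding d_def using ea eb by (simp add: algebra_simps)
  show False
  proof (cases "d \<ge> 1")
    case True
    have "0 \<le> n * (d - 1)" using True n by simp
    then have "n * d \<ge> n" by (simp add: algebra_simps)
    then show False using bd ra rb ab by linarith
  next
    case False
    then have "d \<le> -1" using ne d_def by linarith
    then have "0 \<le> n * (- 1 - d)" using n by simp
    then have "n * d \<le> - n" by (simp add: algebra_simps)
    then show False using bd ra rb ab by linarith
  qed
qed

lemma window_div:
  assumes n: "0 < n" and L: "lipf m x" and W: "\<forall>k\<in>{Q..E}. x k mod int n \<noteq> 0" and E: "E \<le> m"
  shows "Q \<le> k \<Longrightarrow> k \<le> E \<Longrightarrow> x k div int n = x Q div int n"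
proof (induction k)
  case 0 then show ?case by simp
next
  case (Suc k)
  show ?case
  proof (cases "Q = Suc k")
    case True then show ?thesis by simp
  next
    case False
    then have k: "Q \<le> k" "k \<le> E" using Suc.prems by auto
    have "\<bar>x (Suc k) - x k\<bar> \<le> 1" using L Suc.prems E unfolding lipf_def by force
    then have "x (Suc k) div int n = x k div int n"
      using div_eq_near[of "int n" "x (Suc k)" "x k"] n W k Suc.prems by auto
    then show ?thesis using Suc.IH k by simp
  qed
qed

lemma two_abs: "a \<le> y \<Longrightarrow> y \<le> a + n \<Longrightarrow> \<bar>z - y\<bar> \<le> d \<Longrightarrow> \<bar>z - a\<bar> + \<bar>z - (a + n)\<bar> \<le> n + 2*d"
  for a y n z d :: int by (auto simp: abs_if split: if_splits)

lemma main_bound: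
  assumes n: "1 < n" and mQ: "m = p + n + Q" and Qp: "Q \<le> p + 1" and L: "lipf m x"
  shows "\<exists>c. c mod int n = 0 \<and> (costf m (\<lambda>i. x i - c) \<le> fM m (int Q) \<or>
           2 * costf m (\<lambda>i. x i - c) \<le> int n * (int m + 1) + 2 * int Q * (int Q - 1))"
proof (cases "\<exists>k\<in>{Q..p+n}. x k mod int n = 0")
  case True
  then obtain k where k: "Q \<le> k" "k \<le> p + n" "x k mod int n = 0" by auto
  have "costf m (\<lambda>i. x i - x k) \<le> (\<Sum>i\<le>m. \<bar>int i - int k\<bar>)"
    unfolding costf_def
  proof (rule sum_mono)
    fix i assume "i \<in> {..m}"
    then show "\<bar>x i - x k\<bar> \<le> \<bar>int i - int k\<bar>" using lip_dist'[OF L, of k i] k mQ by simp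
  qed
  also have "\<dots> = fM m (int k)" by (simp add: fM_def)
  also have "\<dots> \<le> fM m (int Q)"
  proof -
    have e1: "2 * fM m (int k) = int m * (int m + 1) + 2*int k*int k - 2*int k*int m"
      using fM_mid[of "int k" m] k mQ by simp
    have e2: "2 * fM m (int Q) = int m * (int m + 1) + 2*int Q*int Q - 2*int Q*int m"
      using fM_mid[of "int Q" m] mQ by simp
    have "(int k - int Q) * (int k + int Q - int m) \<le> 0"
      using k mQ by (intro mult_nonneg_nonpos) auto
    moreover have "int k*int k - int k*int m - (int Q*int Q - int Q*int m) = (int k - int Q) * (int k + int Q - int m)"
      by (simp add: algebra_simps)
    ultimately show ?thesis using e1 e2 by linarith
  qed
  finally show ?thesis using k by (intro exI[of _ "x k"]) auto
next
  case False
  then have W: "\<forall>k\<in>{Q..p+n}. x k mod int n \<noteq> 0" by auto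
  have n0: "0 < int n" using n by simp
  define a where "a = (x Q div int n) * int n"
  have inw: "a < x k \<and> x k < a + int n" if k: "Q \<le> k" "k \<le> p + n" for k
  proof -
    have d: "x k div int n = x Q div int n" using window_div[OF _ L W _ k] n mQ by simp
    have "x k = int n * (x k div int n) + x k mod int n" by simp
    moreover have "0 < x k mod int n" "x k mod int n < int n"
      using W k pos_mod_sign[OF n0, of "x k"] pos_mod_bound[OF n0, of "x k"] by force+
    ultimately show ?thesis unfolding a_def d by (simp add: algebra_simps)
  qed
  let ?K = "int p + int n + 2 - int Q"
  have pt: "\<bar>x i - a\<bar> + \<bar>x i - (a + int n)\<bar> \<le> int n - ?K + (\<bar>int i - (int Q - 1)\<bar> + \<bar>int i - (int p + int n + 1)\<bar>)"
    if i: "i \<le> m" for i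
  proof -
    consider "Q \<le> i \<and> i \<le> p + n" | "i < Q" | "p + n < i" by linarith
    then show ?thesis
    proof cases
      case 1
      then show ?thesis using inw[of i] by (simp add: abs_if)
    next
      case 2
      then have Q1: "Q \<ge> 1" by simp
      have "\<bar>x Q - x (Q-1)\<bar> \<le> 1" using L Q1 mQ unfolding lipf_def by force
      moreover have "a < x Q \<and> x Q < a + int n" using inw[of Q] mQ Qp n by simp
      moreover have "\<bar>x i - x (Q-1)\<bar> \<le> int (Q - 1 - i)" using lip_dist[OF L, of i "Q-1"] 2 mQ by (simp add: abs_minus_commute)
      moreover have "int (Q - 1 - i) = int Q - 1 - int i" using 2 by simp
      ultimately have "\<bar>x i - a\<bar> + \<bar>x i - (a + int n)\<bar> \<le> int n + 2 * (int Q - 1 - int i)"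
        by (intro two_abs[of _ "x (Q-1)"]) (auto simp: abs_le_iff)
      moreover have "\<bar>int i - (int Q - 1)\<bar> = int Q - 1 - int i" "\<bar>int i - (int p + int n + 1)\<bar> = int p + int n + 1 - int i"
        using 2 Qp n by auto
      ultimately show ?thesis by simp
    next
      case 3
      have "\<bar>x (p+n+1) - x (p+n)\<bar> \<le> 1" using L 3 i unfolding lipf_def by force
      moreover have "a < x (p+n) \<and> x (p+n) < a + int n" using inw[of "p+n"] Qp n by simp
      moreover have "\<bar>x i - x (p+n+1)\<bar> \<le> int (i - (p+n+1))" using lip_dist[OF L, of "p+n+1" i] 3 i by simp
      moreover have "int (i - (p+n+1)) = int i - int p - int n - 1" using 3 by simp
      ultimately have "\<bar>x i - a\<bar> + \<bar>x i - (a + int n)\<bar> \<le> int n + 2 * (int i - int p - int n - 1)"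
        by (intro two_abs[of _ "x (p+n+1)"]) (auto simp: abs_le_iff)
      moreover have "\<bar>int i - (int Q - 1)\<bar> = int i - int Q + 1" "\<bar>int i - (int p + int n + 1)\<bar> = int i - int p - int n - 1"
        using 3 Qp n by auto
      ultimately show ?thesis by simp
    qed
  qed
  have "costf m (\<lambda>i. x i - a) + costf m (\<lambda>i. x i - (a + int n))
      = (\<Sum>i\<le>m. \<bar>x i - a\<bar> + \<bar>x i - (a + int n)\<bar>)" by (simp add: costf_def sum.distrib)
  also have "\<dots> \<le> (\<Sum>i\<le>m. int n - ?K + (\<bar>int i - (int Q - 1)\<bar> + \<bar>int i - (int p + int n + 1)\<bar>))"
    by (rule sum_mono) (use pt in auto)
  also have "\<dots> = (int m + 1) * (int n - ?K) + fM m (int Q - 1) + fM m (int p + int n + 1)"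
    by (simp add: sum.distrib fM_def)
  also have "\<dots> = int n * (int m + 1) + 2 * int Q * (int Q - 1)"
  proof -
    have h: "2 * fM m (int Q - 1) = int m * (int m + 1) + 2 * (int Q - 1) * (int Q - 1) - 2 * (int Q - 1) * int m"
       "2 * fM m (int p + int n + 1) = int m * (int m + 1) + 2 * (int Q - 1) * (int Q - 1) - 2 * (int Q - 1) * int m"
    proof -
      have "2 * fM m (int Q - 1) = 2 * fM m (int p + int n + 1) \<and>
          2 * fM m (int Q - 1) = int m * (int m + 1) + 2 * (int Q - 1) * (int Q - 1) - 2 * (int Q - 1) * int m"
      proof (cases "Q = 0")
        case True
        then show ?thesis using fM_lo[of "int Q - 1" m] fM_hi[of m "int p + int n + 1"] mQ
          by (simp add: algebra_simps)
      next
        case False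
        then show ?thesis using fM_mid[of "int Q - 1" m] fM_mid[of "int p + int n + 1" m] mQ
          by (simp add: algebra_simps)
      qed
      then show "2 * fM m (int Q - 1) = int m * (int m + 1) + 2 * (int Q - 1) * (int Q - 1) - 2 * (int Q - 1) * int m"
       "2 * fM m (int p + int n + 1) = int m * (int m + 1) + 2 * (int Q - 1) * (int Q - 1) - 2 * (int Q - 1) * int m"
        by auto
    qed
    have "2 * ((int m + 1) * (int n - ?K)) + 2 * fM m (int Q - 1) + 2 * fM m (int p + int n + 1)
        = 2 * (int n * (int m + 1) + 2 * int Q * (int Q - 1))"
      unfolding h using mQ by (simp add: algebra_simps)
    then have "2 * ((int m + 1) * (int n - ?K) + fM m (int Q - 1) + fM m (int p + int n + 1))
        = 2 * (int n * (int m + 1) + 2 * int Q * (int Q - 1))" by (simp only: distrib_left)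
    then show ?thesis by simp
  qed
  finally have S: "costf m (\<lambda>i. x i - a) + costf m (\<lambda>i. x i - (a + int n))
     \<le> int n * (int m + 1) + 2 * int Q * (int Q - 1)" .
  have am: "a mod int n = 0" "(a + int n) mod int n = 0" by (simp_all add: a_def)
  show ?thesis
  proof (cases "costf m (\<lambda>i. x i - a) \<le> costf m (\<lambda>i. x i - (a + int n))")
    case True
    then show ?thesis using S am by (intro exI[of _ a]) auto
  next
    case False
    then show ?thesis using S am by (intro exI[of _ "a + int n"]) auto
  qed
qed

lemma ch2: "2 * (Suc k choose 2) = Suc k * k"
proof (induction k)
  case 0 then show ?case by simp
next
  case (Suc k)
  have "Suc (Suc k) choose 2 = (Suc k choose 1) + (Suc k choose 2)"
    by (simp add: numeral_2_eq_2)
  then show ?case using Suc by simp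
qed

lemma lift_form:
  assumes n: "0 < n" and L: "islift n m (vof n m z) x"
  shows "\<exists>d. d mod int n = 0 \<and> (\<forall>i\<le>m. x i = z i - d)"
proof -
  have x0: "x 0 mod int n = z 0 mod int n" using L by (simp add: islift_def vof_def)
  have "x i = z i - (z 0 - x 0)" if "i \<le> m" for i
    using that
  proof (induction i)
    case 0 then show ?case by simp
  next
    case (Suc i)
    have "Suc i \<in> {1..m}" using Suc.prems by simp
    then have "x (Suc i) - x (Suc i - 1) = vof n m z (Suc i)" using L unfolding islift_def by blast
    then have "x (Suc i) - x i = z (Suc i) - z i" using Suc.prems by (simp add: vof_def)
    then show ?case using Suc by simp
  qed
  then have A: "\<forall>i\<le>m. x i = z i - (z 0 - x 0)" by blast
  have B: "(z 0 - x 0) mod int n = 0" using x0 by (metis mod_eq_dvd_iff dvd_imp_mod_0)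
  show ?thesis by (rule exI[of _ "z 0 - x 0"], rule conjI[OF B A])
qed

lemma not_between: "0 < int n \<Longrightarrow> (c - p) mod int n = 0 \<Longrightarrow> p < c \<Longrightarrow> c < p + int n \<Longrightarrow> False"
  using mod_pos_pos_trivial[of "c - p" "int n"] by simp

lemma sum_u1:
  assumes q: "1 \<le> q" "q \<le> m"
  shows "(\<Sum>i\<le>m. \<bar>(if i < q then int i else int i - 1) - c\<bar>) = fM (m - 1) c + \<bar>int q - 1 - c\<bar>"
proof -
  have "(\<Sum>i\<le>q + k. \<bar>(if i < q then int i else int i - 1) - c\<bar>) = fM (q + k - 1) c + \<bar>int q - 1 - c\<bar>" for k
  proof (induction k)
    case 0
    have "(\<Sum>i\<le>q. \<bar>(if i < q then int i else int i - 1) - c\<bar>) = (\<Sum>i\<le>q - 1. \<bar>int i - c\<bar>) + \<bar>int q - 1 - c\<bar>"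
    proof -
      have "{..q} = insert q {..q-1}" using q by auto
      moreover have "(\<Sum>i\<le>q - 1. \<bar>(if i < q then int i else int i - 1) - c\<bar>) = (\<Sum>i\<le>q - 1. \<bar>int i - c\<bar>)"
        using q by (intro sum.cong) auto
      ultimately show ?thesis using q by simp
    qed
    then show ?case by (simp add: fM_def)
  next
    case (Suc k)
    have e: "q + Suc k - 1 = Suc (q + k - 1)" "int (q + k - 1) + 1 = int (q + k)" using q by auto
    have "fM (q + Suc k - 1) c = fM (q + k - 1) c + \<bar>int (q + k) - c\<bar>"
      unfolding e(1) fM_Suc e(2) ..
    then show ?case using Suc q by simp
  qed
  from this[of "m - q"] show ?thesis using q by simp
qed

lemma neg_mod_add: "(- (a mod n + b)) mod n = (- (a + b)) mod (n::int)"
proof -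
  have "(- (a mod n + b)) mod n = (- ((a mod n + b) mod n)) mod n" by (simp add: mod_minus_eq)
  also have "(a mod n + b) mod n = (a + b) mod n" by (simp add: mod_add_left_eq)
  also have "(- ((a + b) mod n)) mod n = (- (a + b)) mod n" by (simp add: mod_minus_eq)
  finally show ?thesis .
qed

theorem theorem5p31:
  fixes n m :: nat
  assumes "1 < n" and "n \<le> m"
  shows "(even (m - n) \<or> n \<le> (m + 2) div 2 \<longrightarrow>
           dyoke_ecc0 n m = dyoke_dist n m (u0 n m) dyoke_zero \<and>
           dyoke_dist n m (u0 n m) dyoke_zero =
             enat ((((m + n) div 2 + 1) choose 2) + (((m - n + 1) div 2 + 1) choose 2)))
       \<and> (\<not> (even (m - n) \<or> n \<le> (m + 2) div 2) \<longrightarrow>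
           dyoke_ecc0 n m = dyoke_dist n m (u1 n m) dyoke_zero \<and>
           dyoke_dist n m (u1 n m) dyoke_zero =
             dyoke_dist n m (u0 n m) dyoke_zero + enat (n - (m + 2) div 2))"
proof -
  have n1: "1 < n" and nm: "n \<le> m" using assms by auto
  have n0: "0 < n" using n1 by simp
  define p where "p = (m - n) div 2"
  define Q where "Q = (m - n + 1) div 2"
  define q where "q = (m + 2) div 2"
  have mQ: "m = p + n + Q" unfolding p_def Q_def using nm by presburger
  have Qp: "Q \<le> p + 1" "p \<le> Q" unfolding p_def Q_def by presburger+
  have mn2: "(m + n) div 2 = p + n" unfolding p_def using nm by presburger
  define Fn where "Fn = (((m + n) div 2 + 1) choose 2) + (((m - n + 1) div 2 + 1) choose 2)"
  have "2 * Fn = Suc (p + n) * (p + n) + Suc Q * Q"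
    unfolding Fn_def mn2 Q_def[symmetric] using ch2[of "p+n"] ch2[of Q] by simp
  then have F2: "2 * int Fn = (int p + int n) * (int p + int n + 1) + int Q * (int Q + 1)"
    by (simp add: algebra_simps flip: of_nat_mult of_nat_add)
  have fQ: "fM m (int Q) = int Fn"
  proof -
    have "2 * fM m (int Q) = int m * (int m + 1) + 2 * int Q * int Q - 2 * int Q * int m"
      using fM_mid[of "int Q" m] mQ by simp
    also have "\<dots> = 2 * int Fn" unfolding F2 mQ by (simp add: algebra_simps)
    finally show ?thesis by simp
  qed
  have fPn: "fM m (int p + int n) = int Fn"
  proof -
    have "2 * fM m (int p + int n) = int m * (int m + 1) + 2 * (int p + int n) * (int p + int n) - 2 * (int p + int n) * int m"
      using fM_mid[of "int p + int n" m] mQ by simp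
    also have "\<dots> = 2 * int Fn" unfolding F2 mQ by (simp add: algebra_simps)
    finally show ?thesis by simp
  qed

  define cond where "cond = (even (m - n) \<or> n \<le> (m + 2) div 2)"
  define B where "B = (if cond then Fn else Fn + (n - q))"

  have ub: "dyoke_dist n m v dyoke_zero \<le> enat B" if V: "dyoke_vert n m v" for v
  proof -
    obtain x where Lx: "islift n m v x" using lift_exists[OF V] by blast
    have lx: "lipf m x" using lift_lip[OF V Lx] .
    obtain c where c: "c mod int n = 0" and cc: "costf m (\<lambda>i. x i - c) \<le> fM m (int Q) \<or>
           2 * costf m (\<lambda>i. x i - c) \<le> int n * (int m + 1) + 2 * int Q * (int Q - 1)"
      using main_bound[OF n1 mQ Qp(1) lx] by meson
    have Lc: "islift n m v (\<lambda>i. x i - c)" using lift_shift[OF Lx c] .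
    have "costf m (\<lambda>i. x i - c) \<le> int B"
    proof -
      have FB: "Fn \<le> B" unfolding B_def by simp
      have S: "int n * (int m + 1) + 2 * int Q * (int Q - 1) \<le> 2 * int B + 1"
      proof (cases "even (m - n)")
        case True
        then have QQ: "Q = p" unfolding p_def Q_def by presburger
        have "2 * int Fn - (int n * (int m + 1) + 2 * int Q * (int Q - 1)) = 4 * int p"
          unfolding F2 mQ QQ by (simp add: algebra_simps)
        then show ?thesis using FB by linarith
      next
        case False
        then have QQ: "Q = p + 1" unfolding p_def Q_def by presburger
        have e: "int n * (int m + 1) + 2 * int Q * (int Q - 1) = 2 * int Fn - 2 * int p - 2 + int n"
          unfolding F2 mQ QQ by (simp add: algebra_simps)
        have qq: "q = p + 1 + (n + 1) div 2" unfolding q_def using mQ QQ by presburger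
        show ?thesis
        proof (cases "n \<le> q")
          case True
          then have "n \<le> 2 * p + 3" using qq by presburger
          then show ?thesis using e FB by linarith
        next
          case nq: False
          then have "\<not> cond" unfolding cond_def q_def using False by simp
          then have "int B = int Fn + int n - int q" unfolding B_def using nq by simp
          moreover have "2 * int q \<le> int n + 2 * int p + 3" using qq by presburger
          ultimately show ?thesis using e by linarith
        qed
      qed
      from cc show ?thesis
      proof
        assume "costf m (\<lambda>i. x i - c) \<le> fM m (int Q)"
        then show ?thesis using fQ FB by linarith
      next
        assume "2 * costf m (\<lambda>i. x i - c) \<le> int n * (int m + 1) + 2 * int Q * (int Q - 1)"
        then show ?thesis using S by linarith
      qed
    qed
    then have "enat (nat (costf m (\<lambda>i. x i - c))) \<le> enat B" by simp
    then show ?thesis using dist_le[OF n0 V Lc] by (rule order.trans[rotated])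
  qed
  have eccle: "dyoke_ecc0 n m \<le> enat B"
    unfolding dyoke_ecc0_def by (rule SUP_least) (use ub in auto)
  have eccge: "dyoke_dist n m v dyoke_zero \<le> dyoke_ecc0 n m" if "dyoke_vert n m v" for v
    unfolding dyoke_ecc0_def by (rule SUP_upper) (use that in auto)

  define z0 where "z0 = (\<lambda>i::nat. int i - int p)"
  have lz0: "lipf m z0" by (simp add: lipf_def z0_def)
  have u0z: "u0 n m = vof n m z0"
  proof
    fix j
    have pe: "int ((m - n) div 2) = int p" unfolding p_def ..
    have "(- ((- int p) mod int n + int m)) mod int n = (- (int m - int p)) mod int n"
      using neg_mod_add[of "- int p" "int n" "int m"] by simp
    then show "u0 n m j = vof n m z0 j"
      unfolding u0_def vof_def z0_def Let_def pe by auto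
  qed
  have V0: "dyoke_vert n m (u0 n m)" unfolding u0z by (rule vof_vert[OF n0 lz0])
  have d0: "dyoke_dist n m (u0 n m) dyoke_zero = enat Fn"
  proof (rule antisym)
    have L: "islift n m (u0 n m) (\<lambda>i. z0 i - int n)"
      unfolding u0z by (rule lift_shift[OF vof_lift]) simp
    have "costf m (\<lambda>i. z0 i - int n) = fM m (int p + int n)"
      unfolding costf_def fM_def z0_def by (simp add: algebra_simps)
    then show "dyoke_dist n m (u0 n m) dyoke_zero \<le> enat Fn"
      using dist_le[OF n0 V0 L] fPn by simp
  next
    obtain x where L: "islift n m (u0 n m) x" and le: "enat (nat (costf m x)) \<le> dyoke_dist n m (u0 n m) dyoke_zero"
      using dist_ge[OF n0 V0] by blast
    obtain d where d: "d mod int n = 0" and xd: "\<forall>i\<le>m. x i = z0 i - d"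
      using lift_form[OF n0 L[unfolded u0z]] by meson
    define c where "c = int p + d"
    have "costf m x = fM m c" unfolding costf_def fM_def c_def
      by (rule sum.cong) (auto simp: xd z0_def algebra_simps)
    moreover have "fM m c \<ge> int Fn"
    proof -
      have "c \<ge> int p + int n \<or> c \<le> int p"
        using not_between[of n c "int p"] n0 d unfolding c_def by force
      then show ?thesis
      proof
        assume "c \<ge> int p + int n"
        then show ?thesis using fM_up[of m "int p + int n" c] fPn mQ Qp by simp
      next
        assume c: "c \<le> int p"
        have "fM m (int p) \<le> fM m c" using fM_down[of "int p" m c] c mQ Qp by simp
        moreover have "fM m (int p) \<ge> fM m (int Q)"
        proof -
          have e1: "2 * fM m (int p) = int m * (int m + 1) + 2 * int p * int p - 2 * int p * int m"
            using fM_mid[of "int p" m] mQ by simp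
          have e2: "2 * fM m (int Q) = int m * (int m + 1) + 2 * int Q * int Q - 2 * int Q * int m"
            using fM_mid[of "int Q" m] mQ by simp
          have "0 \<le> (int Q - int p) * (int m - int p - int Q)" using Qp mQ by simp
          moreover have "int p * int p - int p * int m - (int Q * int Q - int Q * int m) = (int Q - int p) * (int m - int p - int Q)"
            by (simp add: algebra_simps)
          ultimately show ?thesis using e1 e2 by linarith
        qed
        ultimately show ?thesis using fQ by linarith
      qed
    qed
    ultimately have "enat Fn \<le> enat (nat (costf m x))" by simp
    then show "enat Fn \<le> dyoke_dist n m (u0 n m) dyoke_zero" using le by (rule order.trans)
  qed

  show ?thesis
  proof (intro conjI impI)
    assume C: "even (m - n) \<or> n \<le> (m + 2) div 2"
    then have "B = Fn" unfolding B_def cond_def by simp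
    then show "dyoke_ecc0 n m = dyoke_dist n m (u0 n m) dyoke_zero"
      using eccle eccge[OF V0] d0 by (metis antisym)
    show "dyoke_dist n m (u0 n m) dyoke_zero =
             enat ((((m + n) div 2 + 1) choose 2) + (((m - n + 1) div 2 + 1) choose 2))"
      using d0 unfolding Fn_def .
  next
    assume C: "\<not> (even (m - n) \<or> n \<le> (m + 2) div 2)"
    then have B: "B = Fn + (n - q)" unfolding B_def cond_def by simp
    have QQ: "Q = p + 1" using C unfolding p_def Q_def by presburger
    have nq: "q < n" using C unfolding q_def by simp
    have q1: "1 \<le> q" "q \<le> m" unfolding q_def using nm n1 by auto
    have q2: "int m + 1 \<le> 2 * int q" unfolding q_def by presburger
    define z1 where "z1 = (\<lambda>i::nat. if i < q then int i - int p else int i - int p - 1)"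
    have lz1: "lipf m z1" by (auto simp: lipf_def z1_def)
    have u1z: "u1 n m = vof n m z1"
    proof
      fix j
      have pe: "int ((m - n) div 2) = int p" unfolding p_def ..
        have "(- ((- int p) mod int n + int m - 1)) mod int n = (- (int m - int p - 1)) mod int n"
        using neg_mod_add[of "- int p" "int n" "int m - 1"] by (simp add: algebra_simps)
      then show "u1 n m j = vof n m z1 j"
        unfolding u1_def vof_def z1_def Let_def pe q_def[symmetric] using q1 by auto
    qed
    have V1: "dyoke_vert n m (u1 n m)" unfolding u1z by (rule vof_vert[OF n0 lz1])
    have d1: "enat B \<le> dyoke_dist n m (u1 n m) dyoke_zero"
    proof -
      obtain x where L: "islift n m (u1 n m) x" and le: "enat (nat (costf m x)) \<le> dyoke_dist n m (u1 n m) dyoke_zero"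
        using dist_ge[OF n0 V1] by blast
      obtain d where d: "d mod int n = 0" and xd: "\<forall>i\<le>m. x i = z1 i - d"
        using lift_form[OF n0 L[unfolded u1z]] by meson
      define c where "c = int p + d"
      have "costf m x = (\<Sum>i\<le>m. \<bar>(if i < q then int i else int i - 1) - c\<bar>)" unfolding costf_def c_def
        by (rule sum.cong) (auto simp: xd z1_def algebra_simps)
      also have "\<dots> = fM (m - 1) c + \<bar>int q - 1 - c\<bar>" by (rule sum_u1[OF q1])
      finally have cx: "costf m x = fM (m - 1) c + \<bar>int q - 1 - c\<bar>" .
      have M1: "int (m - 1) = int n + 2 * int p" using mQ QQ by simp
      have fa: "2 * fM (m - 1) (int p + int n) = 2 * int Fn - 2 * int p - 2"
      proof -
        have "2 * fM (m - 1) (int p + int n) = int (m - 1) * (int (m - 1) + 1) + 2 * (int p + int n) * (int p + int n) - 2 * (int p + int n) * int (m - 1)"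
          using fM_mid[of "int p + int n" "m - 1"] M1 by simp
        then show ?thesis unfolding M1 F2 QQ by (simp add: algebra_simps)
      qed
      have fb: "2 * fM (m - 1) (int p) = 2 * int Fn - 2 * int p - 2"
      proof -
        have "2 * fM (m - 1) (int p) = int (m - 1) * (int (m - 1) + 1) + 2 * int p * int p - 2 * int p * int (m - 1)"
          using fM_mid[of "int p" "m - 1"] M1 by simp
        then show ?thesis unfolding M1 F2 QQ by (simp add: algebra_simps)
      qed
      have "costf m x \<ge> int B"
      proof -
        have IB: "int B = int Fn + int n - int q" using B nq by simp
        have "c \<ge> int p + int n \<or> c \<le> int p"
          using not_between[of n c "int p"] n0 d unfolding c_def by force
        then show ?thesis
        proof
          assume c: "c \<ge> int p + int n"
          have "fM (m - 1) (int p + int n) \<le> fM (m - 1) c" using fM_up[of "m - 1" "int p + int n" c] c M1 by simp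
          then show ?thesis using cx fa IB c by linarith
        next
          assume c: "c \<le> int p"
          have "fM (m - 1) (int p) \<le> fM (m - 1) c" using fM_down[of "int p" "m - 1" c] c M1 by simp
          then show ?thesis using cx fb IB c q2 mQ QQ by linarith
        qed
      qed
      then have "enat B \<le> enat (nat (costf m x))" by simp
      then show ?thesis using le by (rule order.trans)
    qed
    have e1: "dyoke_ecc0 n m = enat B" and e2: "dyoke_dist n m (u1 n m) dyoke_zero = enat B"
      using eccle eccge[OF V1] d1 by (metis antisym order.trans)+
    show "dyoke_ecc0 n m = dyoke_dist n m (u1 n m) dyoke_zero" using e1 e2 by simp
    show "dyoke_dist n m (u1 n m) dyoke_zero = dyoke_dist n m (u0 n m) dyoke_zero + enat (n - (m + 2) div 2)"
      using e2 d0 B unfolding q_def by simp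
  qed
qed

end
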